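(* Let $\theta$ be a random variable with a continuous distribution, let $u(q,\theta)$ be twice differentiable, strictly concave and monotone increasing in $q$ for every $\theta$, let $\pi_0>0$, $\pi_2>0$, $p\in(0,1)$, and let $\phi:\mathbb{R}\to\mathbb{R}$ be convex, twice differentiable, with $\phi(0)=\phi'(0)=0$ and $\phi(x)=\phi(-x)$. Define $J^b(f,q,\theta)=\pi_0 q-u(q,\theta)+\phi(f-q)$, $J^c(f,q,\theta)=\pi_0 q-u(q,\theta)-\pi_2(f-q)$, $q^b(f,\theta)=\arg\min_q J^b(f,q,\theta)$, $q^c(\theta)=\arg\min_q J^c(f,q,\theta)$, $$H(f)=p\,\mathbb{E}_\theta J^c(f,q^c(\theta),\theta)+(1-p)\,\mathbb{E}_\theta J^b(f,q^b(f,\theta),\theta),$$ and the expected marginal utility $$M(f)=p\,\mathbb{E}_\theta\frac{\partial u}{\partial q}(q^c(\theta),\theta)+(1-p)\,\mathbb{E}_\theta\frac{\partial u}{\partial q}(q^b(f,\theta),\theta).$$ Then the optimal baseline report $f^*$ (a minimizer of $H$) satisfies $\pi_0=M(f^* )$ and is a global minimizer of $H$. Moreover, the minimizer is unique when $\phi$ is strictly convex.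
   Context: This describes a consumer in an incentive-based demand response program with self-reported baseline $f$: with probability $p$ the consumer is called and paid $\pi_2$ per unit of reduction $f-q$; otherwise it is charged the penalty $\phi(f-q)$. $\pi_0$ is the retail price of electricity. The minimizers $q^b$, $q^c$ are assumed to exist and be characterized by their first-order conditions. *)

theory Defs
  imports "HOL-Analysis.Analysis" "HOL-Probability.Probability"
begin

definition strictly_convex_on :: "real set \<Rightarrow> (real \<Rightarrow> real) \<Rightarrow> bool" where
  "strictly_convex_on S g \<longleftrightarrow> convex S \<and>
     (\<forall>x\<in>S. \<forall>y\<in>S. \<forall>t. x \<noteq> y \<and> 0 < t \<and> t < 1 \<longrightarrow>
        g (t * x + (1 - t) * y) < t * g x + (1 - t) * g y)"

definition strictly_concave_on :: "real set \<Rightarrow> (real \<Rightarrow> real) \<Rightarrow> bool" where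
  "strictly_concave_on S g \<longleftrightarrow> strictly_convex_on S (\<lambda>x. - g x)"

definition twice_differentiable :: "(real \<Rightarrow> real) \<Rightarrow> bool" where
  "twice_differentiable g \<longleftrightarrow>
     (\<forall>x. g differentiable (at x)) \<and> (\<forall>x. deriv g differentiable (at x))"

text \<open>Cost when not called (baseline penalty) and when called (payment).\<close>
definition Jb :: "real \<Rightarrow> (real \<Rightarrow> real \<Rightarrow> real) \<Rightarrow> (real \<Rightarrow> real) \<Rightarrow> real \<Rightarrow> real \<Rightarrow> real \<Rightarrow> real" where
  "Jb pi0 u \<phi> f q \<theta> = pi0 * q - u q \<theta> + \<phi> (f - q)"

definition Jc :: "real \<Rightarrow> real \<Rightarrow> (real \<Rightarrow> real \<Rightarrow> real) \<Rightarrow> real \<Rightarrow> real \<Rightarrow> real \<Rightarrow> real" where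
  "Jc pi0 pi2 u f q \<theta> = pi0 * q - u q \<theta> - pi2 * (f - q)"

definition H :: "real measure \<Rightarrow> real \<Rightarrow> real \<Rightarrow> real \<Rightarrow> (real \<Rightarrow> real \<Rightarrow> real) \<Rightarrow> (real \<Rightarrow> real)
     \<Rightarrow> (real \<Rightarrow> real \<Rightarrow> real) \<Rightarrow> (real \<Rightarrow> real) \<Rightarrow> real \<Rightarrow> real" where
  "H D p pi0 pi2 u \<phi> qb qc f =
     p * (\<integral>\<theta>. Jc pi0 pi2 u f (qc \<theta>) \<theta> \<partial>D) + (1 - p) * (\<integral>\<theta>. Jb pi0 u \<phi> f (qb f \<theta>) \<theta> \<partial>D)"

definition EMU :: "real measure \<Rightarrow> real \<Rightarrow> (real \<Rightarrow> real \<Rightarrow> real)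
     \<Rightarrow> (real \<Rightarrow> real \<Rightarrow> real) \<Rightarrow> (real \<Rightarrow> real) \<Rightarrow> real \<Rightarrow> real" where
  "EMU D p u qb qc f =
     p * (\<integral>\<theta>. deriv (\<lambda>q. u q \<theta>) (qc \<theta>) \<partial>D)
     + (1 - p) * (\<integral>\<theta>. deriv (\<lambda>q. u q \<theta>) (qb f \<theta>) \<partial>D)"

end

theory Submission imports Defs begin

lemma tw_deriv: "twice_differentiable g \<Longrightarrow> (g has_real_derivative deriv g x) (at x)"
  unfolding twice_differentiable_def using DERIV_deriv_iff_real_differentiable by blast

lemma tw_cont: "twice_differentiable g \<Longrightarrow> isCont (deriv g) x"
  unfolding twice_differentiable_def using differentiable_imp_continuous_within by blast

lemma cvx_tangent:
  assumes "convex_on UNIV g" "(g has_real_derivative d) (at a)"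
  shows "g b \<ge> g a + d * (b - a)"
  using convex_on_imp_above_tangent[OF assms(1), of a b d] assms(2) by auto

lemma sc_app:
  assumes "strictly_convex_on UNIV g" "x \<noteq> y" "0 < t" "t < 1"
  shows "g (t * x + (1 - t) * y) < t * g x + (1 - t) * g y"
  using assms unfolding strictly_convex_on_def by blast

lemma sc_cvx:
  assumes "strictly_convex_on UNIV g" shows "convex_on UNIV g"
proof (rule convex_onI)
  fix t x y :: real assume t: "0 < t" "t < 1"
  show "g ((1 - t) *\<^sub>R x + t *\<^sub>R y) \<le> (1 - t) * g x + t * g y"
  proof (cases "x = y")
    case True thus ?thesis by (simp add: algebra_simps)
  next
    case False
    with assms t have "g ((1-t) * x + (1 - (1-t)) * y) < (1-t) * g x + (1 - (1-t)) * g y"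
      using sc_app[of g x y "1-t"] by simp
    thus ?thesis by simp
  qed
qed simp

lemma sc_tangent_strict:
  assumes sc: "strictly_convex_on UNIV g" and d: "(g has_real_derivative d) (at a)" and ab: "a \<noteq> b"
  shows "g b > g a + d * (b - a)"
proof -
  have "g ((1/2) * a + (1 - 1/2) * b) < (1/2) * g a + (1 - 1/2) * g b"
    using sc_app[OF sc ab, of "1/2"] by simp
  moreover have "g ((1/2) * a + (1 - 1/2) * b) \<ge> g a + d * ((1/2) * a + (1 - 1/2) * b - a)"
    by (rule cvx_tangent[OF sc_cvx[OF sc] d])
  ultimately show ?thesis by (simp add: algebra_simps)
qed

lemma sc_deriv_mono:
  assumes sc: "strictly_convex_on UNIV g" and d: "\<And>x. (g has_real_derivative g' x) (at x)" and ab: "a < b"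
  shows "g' a < g' b"
proof -
  have 1: "g b > g a + g' a * (b - a)" using sc_tangent_strict[OF sc d] ab by auto
  have 2: "g a > g b + g' b * (a - b)" using sc_tangent_strict[OF sc d] ab by auto
  from 1 2 have "g' a * (b - a) < g' b * (b - a)" by (simp add: algebra_simps)
  thus ?thesis using ab by simp
qed

lemma cvx_deriv_mono:
  assumes c: "convex_on UNIV g" and d: "\<And>x. (g has_real_derivative g' x) (at x)" and ab: "a \<le> b"
  shows "g' a \<le> g' b"
proof -
  have 1: "g b \<ge> g a + g' a * (b - a)" using cvx_tangent[OF c d] by auto
  have 2: "g a \<ge> g b + g' b * (a - b)" using cvx_tangent[OF c d] by auto
  from 1 2 have "g' a * (b - a) \<le> g' b * (b - a)" by (simp add: algebra_simps)
  thus ?thesis using ab by (cases "a = b") auto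
qed

theorem theorem1:
  fixes D :: "real measure"
    and u :: "real \<Rightarrow> real \<Rightarrow> real"
    and \<phi> :: "real \<Rightarrow> real"
    and pi0 pi2 p :: real
    and qb :: "real \<Rightarrow> real \<Rightarrow> real"
    and qc :: "real \<Rightarrow> real"
  assumes D_prob: "prob_space D" and D_borel: "sets D = sets borel"
    and D_cont: "\<And>x. measure D {x} = 0"
    and u_twice: "\<And>\<theta>. twice_differentiable (\<lambda>q. u q \<theta>)"
    and u_concave: "\<And>\<theta>. strictly_concave_on UNIV (\<lambda>q. u q \<theta>)"
    and u_mono: "\<And>\<theta>. mono (\<lambda>q. u q \<theta>)"
    and pi0_pos: "pi0 > 0" and pi2_pos: "pi2 > 0"
    and p_pos: "0 < p" and p_lt1: "p < 1"
    and phi_convex: "convex_on UNIV \<phi>"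
    and phi_twice: "twice_differentiable \<phi>"
    and phi_0: "\<phi> 0 = 0" and dphi_0: "deriv \<phi> 0 = 0"
    and phi_even: "\<And>x. \<phi> x = \<phi> (- x)"
    and qb_min: "\<And>f \<theta> q. Jb pi0 u \<phi> f (qb f \<theta>) \<theta> \<le> Jb pi0 u \<phi> f q \<theta>"
    and qc_min: "\<And>f \<theta> q. Jc pi0 pi2 u f (qc \<theta>) \<theta> \<le> Jc pi0 pi2 u f q \<theta>"
    and int_Jc: "\<And>f. integrable D (\<lambda>\<theta>. Jc pi0 pi2 u f (qc \<theta>) \<theta>)"
    and int_Jb: "\<And>f. integrable D (\<lambda>\<theta>. Jb pi0 u \<phi> f (qb f \<theta>) \<theta>)"
    and int_duc: "integrable D (\<lambda>\<theta>. deriv (\<lambda>q. u q \<theta>) (qc \<theta>))"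
    and int_dub: "\<And>f. integrable D (\<lambda>\<theta>. deriv (\<lambda>q. u q \<theta>) (qb f \<theta>))"
  shows "(\<forall>fs. (\<forall>f. H D p pi0 pi2 u \<phi> qb qc fs \<le> H D p pi0 pi2 u \<phi> qb qc f)
                \<longrightarrow> pi0 = EMU D p u qb qc fs)
       \<and> (\<forall>fs. pi0 = EMU D p u qb qc fs
                \<longrightarrow> (\<forall>f. H D p pi0 pi2 u \<phi> qb qc fs \<le> H D p pi0 pi2 u \<phi> qb qc f))
       \<and> (strictly_convex_on UNIV \<phi> \<longrightarrow>
            (\<forall>f1 f2. (\<forall>f. H D p pi0 pi2 u \<phi> qb qc f1 \<le> H D p pi0 pi2 u \<phi> qb qc f)
                   \<and> (\<forall>f. H D p pi0 pi2 u \<phi> qb qc f2 \<le> H D p pi0 pi2 u \<phi> qb qc f)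
                   \<longrightarrow> f1 = f2))"
proof -
  interpret P: prob_space D by (rule D_prob)
  define du where "du = (\<lambda>\<theta>. deriv (\<lambda>q. u q \<theta>))"
  define dphi where "dphi = deriv \<phi>"
  have hu: "((\<lambda>q. u q \<theta>) has_real_derivative du \<theta> q) (at q)" for \<theta> q
    unfolding du_def by (rule tw_deriv[OF u_twice])
  have hphi: "(\<phi> has_real_derivative dphi x) (at x)" for x
    unfolding dphi_def by (rule tw_deriv[OF phi_twice])
  have du_cont: "isCont (du \<theta>) q" for \<theta> q
    unfolding du_def by (rule tw_cont[OF u_twice])
  have hw: "((\<lambda>q. - u q \<theta>) has_real_derivative - du \<theta> q) (at q)" for \<theta> q
    by (rule DERIV_minus[OF hu])
  have scw: "strictly_convex_on UNIV (\<lambda>q. - u q \<theta>)" for \<theta>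
    using u_concave unfolding strictly_concave_on_def by blast
  have du_strict: "du \<theta> b < du \<theta> a" if "a < b" for \<theta> a b
    using sc_deriv_mono[OF scw hw that] by simp
  have dphi_mono: "dphi a \<le> dphi b" if "a \<le> b" for a b
    using cvx_deriv_mono[OF phi_convex hphi that] .
  have u_tan: "u q \<theta> \<le> u qs \<theta> + du \<theta> qs * (q - qs)" for \<theta> q qs
    using cvx_tangent[OF sc_cvx[OF scw] hw, of qs \<theta> q] by simp
  have phi_tan: "\<phi> y \<ge> \<phi> x + dphi x * (y - x)" for x y
    using cvx_tangent[OF phi_convex hphi] .
  have FOC_c: "du \<theta> (qc \<theta>) = pi0 + pi2" for \<theta>
  proof -
    have d: "((\<lambda>q. Jc pi0 pi2 u 0 q \<theta>) has_real_derivative (pi0 - du \<theta> (qc \<theta>) + pi2)) (at (qc \<theta>))"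
      unfolding Jc_def by (auto intro!: derivative_eq_intros hu)
    have "pi0 - du \<theta> (qc \<theta>) + pi2 = 0"
      by (rule DERIV_local_min[OF d, of 1]) (auto intro: qc_min)
    thus ?thesis by simp
  qed
  have FOC_b: "du \<theta> (qb f \<theta>) + dphi (f - qb f \<theta>) = pi0" for f \<theta>
  proof -
    have d0: "((\<lambda>q. \<phi> (f - q)) has_real_derivative (dphi (f - qb f \<theta>) * (- 1))) (at (qb f \<theta>))"
      by (rule DERIV_chain2[OF hphi]) (auto intro!: derivative_eq_intros)
    have d: "((\<lambda>q. Jb pi0 u \<phi> f q \<theta>) has_real_derivative (pi0 - du \<theta> (qb f \<theta>) + dphi (f - qb f \<theta>) * (- 1))) (at (qb f \<theta>))"
      unfolding Jb_def by (intro derivative_intros hu d0 DERIV_cmult_Id)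
    have "pi0 - du \<theta> (qb f \<theta>) + dphi (f - qb f \<theta>) * (- 1) = 0"
      by (rule DERIV_local_min[OF d, of 1]) (auto intro: qb_min)
    thus ?thesis by simp
  qed
  have sub: "Jb pi0 u \<phi> f (qb f \<theta>) \<theta> \<ge> Jb pi0 u \<phi> fs (qb fs \<theta>) \<theta> + (pi0 - du \<theta> (qb fs \<theta>)) * (f - fs)"
    for f fs \<theta>
  proof -
    have 1: "u (qb f \<theta>) \<theta> \<le> u (qb fs \<theta>) \<theta> + du \<theta> (qb fs \<theta>) * (qb f \<theta> - qb fs \<theta>)" by (rule u_tan)
    have 2: "\<phi> (f - qb f \<theta>) \<ge> \<phi> (fs - qb fs \<theta>) + dphi (fs - qb fs \<theta>) * ((f - qb f \<theta>) - (fs - qb fs \<theta>))"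
      by (rule phi_tan)
    have 3: "dphi (fs - qb fs \<theta>) = pi0 - du \<theta> (qb fs \<theta>)" using FOC_b[of \<theta> fs] by simp
    show ?thesis using 1 2 unfolding Jb_def 3 by (simp add: algebra_simps)
  qed
  have qmono: "qb f1 \<theta> \<le> qb f2 \<theta>" if "f1 \<le> f2" for f1 f2 \<theta>
  proof (rule ccontr)
    assume c: "\<not> qb f1 \<theta> \<le> qb f2 \<theta>"
    hence a: "du \<theta> (qb f1 \<theta>) < du \<theta> (qb f2 \<theta>)" by (intro du_strict) simp
    have b: "dphi (f1 - qb f1 \<theta>) \<le> dphi (f2 - qb f2 \<theta>)" using that c by (intro dphi_mono) simp
    show False using a b FOC_b[of \<theta> f1] FOC_b[of \<theta> f2] by simp
  qed
  have qlip: "qb f2 \<theta> - qb f1 \<theta> \<le> f2 - f1" if "f1 \<le> f2" for f1 f2 \<theta>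
  proof (rule ccontr)
    assume c: "\<not> ?thesis"
    hence a: "du \<theta> (qb f2 \<theta>) < du \<theta> (qb f1 \<theta>)" using that by (intro du_strict) simp
    have b: "dphi (f2 - qb f2 \<theta>) \<le> dphi (f1 - qb f1 \<theta>)" using c by (intro dphi_mono) simp
    show False using a b FOC_b[of \<theta> f1] FOC_b[of \<theta> f2] by simp
  qed
  have dumono: "du \<theta> (qb f2 \<theta>) \<le> du \<theta> (qb f1 \<theta>)" if "f1 \<le> f2" for f1 f2 \<theta>
    using qmono[OF that, of \<theta>] du_strict[of "qb f1 \<theta>" "qb f2 \<theta>" \<theta>] by (cases "qb f1 \<theta> = qb f2 \<theta>") auto
  define A where "A f = (\<integral>\<theta>. Jb pi0 u \<phi> f (qb f \<theta>) \<theta> \<partial>D)" for f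
  define B where "B f = (\<integral>\<theta>. du \<theta> (qb f \<theta>) \<partial>D)" for f
  define C where "C = (\<integral>\<theta>. Jc pi0 pi2 u 0 (qc \<theta>) \<theta> \<partial>D)"
  have intB: "integrable D (\<lambda>\<theta>. du \<theta> (qb f \<theta>))" for f
    using int_dub unfolding du_def .
  have Hf: "H D p pi0 pi2 u \<phi> qb qc f = p * (C - pi2 * f) + (1 - p) * A f" for f
  proof -
    have "Jc pi0 pi2 u f (qc \<theta>) \<theta> = Jc pi0 pi2 u 0 (qc \<theta>) \<theta> - pi2 * f" for \<theta>
      unfolding Jc_def by (simp add: algebra_simps)
    hence "(\<integral>\<theta>. Jc pi0 pi2 u f (qc \<theta>) \<theta> \<partial>D) = (\<integral>\<theta>. Jc pi0 pi2 u 0 (qc \<theta>) \<theta> - pi2 * f \<partial>D)"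
      by simp
    also have "\<dots> = C - pi2 * f" unfolding C_def
      by (simp add: Bochner_Integration.integral_diff[OF int_Jc P.integrable_const] P.prob_space)
    finally show ?thesis unfolding H_def A_def by simp
  qed
  have Ef: "EMU D p u qb qc f = p * (pi0 + pi2) + (1 - p) * B f" for f
  proof -
    have "(\<integral>\<theta>. deriv (\<lambda>q. u q \<theta>) (qc \<theta>) \<partial>D) = (\<integral>\<theta>. pi0 + pi2 \<partial>D)"
      using FOC_c unfolding du_def by simp
    thus ?thesis unfolding EMU_def B_def du_def by (simp add: P.prob_space)
  qed
  have Amono: "A f \<ge> A fs + (pi0 - B fs) * (f - fs)" for f fs
  proof -
    have intR: "integrable D (\<lambda>\<theta>. Jb pi0 u \<phi> fs (qb fs \<theta>) \<theta> + (pi0 - du \<theta> (qb fs \<theta>)) * (f - fs))"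
      by (auto intro!: Bochner_Integration.integrable_add Bochner_Integration.integrable_diff integrable_mult_left integrable_mult_right int_Jb intB)
    have "(\<integral>\<theta>. Jb pi0 u \<phi> fs (qb fs \<theta>) \<theta> + (pi0 - du \<theta> (qb fs \<theta>)) * (f - fs) \<partial>D) \<le> A f"
      unfolding A_def by (intro integral_mono sub int_Jb intR)
    moreover have "(\<integral>\<theta>. Jb pi0 u \<phi> fs (qb fs \<theta>) \<theta> + (pi0 - du \<theta> (qb fs \<theta>)) * (f - fs) \<partial>D)
        = A fs + (pi0 - B fs) * (f - fs)"
      unfolding A_def B_def
      by (subst Bochner_Integration.integral_add) (auto intro!: int_Jb Bochner_Integration.integrable_diff integrable_mult_left integrable_mult_right intB simp: Bochner_Integration.integral_diff intB P.prob_space)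
    ultimately show ?thesis by simp
  qed
  define G where "G f = pi0 - EMU D p u qb qc f" for f
  have G_eq: "G f = (1 - p) * (pi0 - B f) - p * pi2" for f
    unfolding G_def Ef by (simp add: algebra_simps)
  have KI: "H D p pi0 pi2 u \<phi> qb qc f \<ge> H D p pi0 pi2 u \<phi> qb qc fs + (f - fs) * G fs" for f fs
  proof -
    have "(1 - p) * A f \<ge> (1 - p) * (A fs + (pi0 - B fs) * (f - fs))"
      using Amono p_lt1 by (intro mult_left_mono) auto
    thus ?thesis unfolding Hf G_eq by (simp add: algebra_simps)
  qed
  have Bcont: "(\<lambda>n. B (h n)) \<longlonglongrightarrow> B fs" if hl: "h \<longlonglongrightarrow> fs" and hb: "\<And>n. \<bar>h n - fs\<bar> \<le> 1" for h fs
    unfolding B_def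
  proof (rule integral_dominated_convergence[where w = "\<lambda>\<theta>. \<bar>du \<theta> (qb (fs-1) \<theta>)\<bar> + \<bar>du \<theta> (qb (fs+1) \<theta>)\<bar>"])
    show "(\<lambda>\<theta>. du \<theta> (qb fs \<theta>)) \<in> borel_measurable D" by (rule borel_measurable_integrable[OF intB])
    show "(\<lambda>\<theta>. du \<theta> (qb (h i) \<theta>)) \<in> borel_measurable D" for i by (rule borel_measurable_integrable[OF intB])
    show "integrable D (\<lambda>\<theta>. \<bar>du \<theta> (qb (fs-1) \<theta>)\<bar> + \<bar>du \<theta> (qb (fs+1) \<theta>)\<bar>)"
      by (intro Bochner_Integration.integrable_add integrable_abs intB)
    show "AE \<theta> in D. (\<lambda>i. du \<theta> (qb (h i) \<theta>)) \<longlonglongrightarrow> du \<theta> (qb fs \<theta>)"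
    proof (rule AE_I2)
      fix \<theta>
      have "(\<lambda>n. qb (h n) \<theta> - qb fs \<theta>) \<longlonglongrightarrow> 0"
      proof (rule Lim_null_comparison[where g = "\<lambda>n. \<bar>h n - fs\<bar>"])
        show "\<forall>\<^sub>F n in sequentially. norm (qb (h n) \<theta> - qb fs \<theta>) \<le> \<bar>h n - fs\<bar>"
        proof (intro always_eventually allI)
          fix n
          show "norm (qb (h n) \<theta> - qb fs \<theta>) \<le> \<bar>h n - fs\<bar>"
          proof (cases "h n \<le> fs")
            case True thus ?thesis using qmono[OF True, of \<theta>] qlip[OF True, of \<theta>] by simp
          next
            case False
            hence F: "fs \<le> h n" by simp
            thus ?thesis using qmono[OF F, of \<theta>] qlip[OF F, of \<theta>] by simp
          qed
        qed
        have "(\<lambda>n. h n - fs) \<longlonglongrightarrow> 0" using hl by (simp add: LIM_zero)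
        thus "(\<lambda>n. \<bar>h n - fs\<bar>) \<longlonglongrightarrow> 0" using tendsto_rabs_zero by blast
      qed
      hence "(\<lambda>n. qb (h n) \<theta>) \<longlonglongrightarrow> qb fs \<theta>" by (rule LIM_zero_cancel)
      thus "(\<lambda>i. du \<theta> (qb (h i) \<theta>)) \<longlonglongrightarrow> du \<theta> (qb fs \<theta>)"
        by (rule isCont_tendsto_compose[OF du_cont])
    qed
    show "AE \<theta> in D. norm (du \<theta> (qb (h i) \<theta>)) \<le> \<bar>du \<theta> (qb (fs-1) \<theta>)\<bar> + \<bar>du \<theta> (qb (fs+1) \<theta>)\<bar>" for i
    proof (rule AE_I2)
      fix \<theta>
      have 1: "fs - 1 \<le> h i" "h i \<le> fs + 1" using hb[of i] by auto
      show "norm (du \<theta> (qb (h i) \<theta>)) \<le> \<bar>du \<theta> (qb (fs-1) \<theta>)\<bar> + \<bar>du \<theta> (qb (fs+1) \<theta>)\<bar>"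
        using dumono[OF 1(1), of \<theta>] dumono[OF 1(2), of \<theta>] by auto
    qed
  qed
  have c1: "pi0 = EMU D p u qb qc fs" if min: "\<forall>f. H D p pi0 pi2 u \<phi> qb qc fs \<le> H D p pi0 pi2 u \<phi> qb qc f" for fs
  proof -
    have pos: "G f \<ge> 0" if "f > fs" for f
    proof (rule ccontr)
      assume "\<not> G f \<ge> 0"
      hence "(fs - f) * G f > 0" using that by (intro mult_neg_neg) auto
      moreover have "H D p pi0 pi2 u \<phi> qb qc fs \<ge> H D p pi0 pi2 u \<phi> qb qc f + (fs - f) * G f" by (rule KI)
      ultimately show False using min[rule_format, of f] by linarith
    qed
    have neg: "G f \<le> 0" if "f < fs" for f
    proof (rule ccontr)
      assume "\<not> G f \<le> 0"
      hence "(fs - f) * G f > 0" using that by (intro mult_pos_pos) auto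
      moreover have "H D p pi0 pi2 u \<phi> qb qc fs \<ge> H D p pi0 pi2 u \<phi> qb qc f + (fs - f) * G f" by (rule KI)
      ultimately show False using min[rule_format, of f] by linarith
    qed
    have inv0: "(\<lambda>n. inverse (real (Suc n))) \<longlonglongrightarrow> 0" by (rule LIMSEQ_inverse_real_of_nat)
    have invb: "\<bar>inverse (real (Suc n))\<bar> \<le> 1" for n by (simp add: inverse_le_1_iff)
    have l1: "(\<lambda>n. fs + inverse (real (Suc n))) \<longlonglongrightarrow> fs" using tendsto_add[OF tendsto_const inv0] by simp
    have l2: "(\<lambda>n. fs - inverse (real (Suc n))) \<longlonglongrightarrow> fs" using tendsto_diff[OF tendsto_const inv0] by simp
    have b1: "(\<lambda>n. B (fs + inverse (real (Suc n)))) \<longlonglongrightarrow> B fs"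
      by (rule Bcont[OF l1]) (use invb in simp)
    have g1: "(\<lambda>n. G (fs + inverse (real (Suc n)))) \<longlonglongrightarrow> G fs"
      unfolding G_eq by (intro tendsto_diff tendsto_mult tendsto_const b1)
    have b2: "(\<lambda>n. B (fs - inverse (real (Suc n)))) \<longlonglongrightarrow> B fs"
      by (rule Bcont[OF l2]) (use invb in simp)
    have g2: "(\<lambda>n. G (fs - inverse (real (Suc n)))) \<longlonglongrightarrow> G fs"
      unfolding G_eq by (intro tendsto_diff tendsto_mult tendsto_const b2)
    have p1: "\<forall>n\<ge>0. 0 \<le> G (fs + inverse (real (Suc n)))" by (intro allI impI pos) simp
    have p2: "\<forall>n\<ge>0. G (fs - inverse (real (Suc n))) \<le> 0" by (intro allI impI neg) simp
    have "0 \<le> G fs" using LIMSEQ_le_const[OF g1] p1 by blast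
    moreover have "G fs \<le> 0" using LIMSEQ_le_const2[OF g2] p2 by blast
    ultimately show ?thesis unfolding G_def by simp
  qed
  have c2: "H D p pi0 pi2 u \<phi> qb qc fs \<le> H D p pi0 pi2 u \<phi> qb qc f" if "pi0 = EMU D p u qb qc fs" for fs f
  proof -
    have "H D p pi0 pi2 u \<phi> qb qc f \<ge> H D p pi0 pi2 u \<phi> qb qc fs + (f - fs) * G fs" by (rule KI)
    moreover have "G fs = 0" using that unfolding G_def by simp
    ultimately show ?thesis by simp
  qed
  have key: False if scphi: "strictly_convex_on UNIV \<phi>" and lt: "f1 < f2" and z: "G f1 = 0" "G f2 = 0" for f1 f2
  proof -
    have e: "(1 - p) * (pi0 - B f1) = (1 - p) * (pi0 - B f2)" using z unfolding G_eq by simp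
    have "B f1 = B f2" using e p_lt1 by simp
    have intd: "integrable D (\<lambda>\<theta>. du \<theta> (qb f1 \<theta>) - du \<theta> (qb f2 \<theta>))"
      by (intro Bochner_Integration.integrable_diff intB)
    have "(\<integral>\<theta>. du \<theta> (qb f1 \<theta>) - du \<theta> (qb f2 \<theta>) \<partial>D) = 0"
      using \<open>B f1 = B f2\<close> unfolding B_def by (simp add: Bochner_Integration.integral_diff intB)
    moreover have "AE \<theta> in D. 0 \<le> du \<theta> (qb f1 \<theta>) - du \<theta> (qb f2 \<theta>)"
      using dumono[of f1 f2] lt by auto
    ultimately have ae: "AE \<theta> in D. du \<theta> (qb f1 \<theta>) - du \<theta> (qb f2 \<theta>) = 0"
      using integral_nonneg_eq_0_iff_AE[OF intd] by simp
    obtain \<theta> where th: "du \<theta> (qb f1 \<theta>) - du \<theta> (qb f2 \<theta>) = 0"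
    proof (rule ccontr)
      assume "\<not> thesis"
      hence nz: "\<And>\<theta>. du \<theta> (qb f1 \<theta>) - du \<theta> (qb f2 \<theta>) \<noteq> 0" using that by blast
      have "AE \<theta> in D. False" using ae by (rule eventually_mono) (use nz in blast)
      thus False by (simp add: P.AE_False)
    qed
    have qe: "qb f1 \<theta> = qb f2 \<theta>"
    proof (rule ccontr)
      assume "qb f1 \<theta> \<noteq> qb f2 \<theta>"
      hence "qb f1 \<theta> < qb f2 \<theta>" using qmono[of f1 f2 \<theta>] lt by simp
      thus False using du_strict[of "qb f1 \<theta>" "qb f2 \<theta>" \<theta>] th by simp
    qed
    have "dphi (f1 - qb f1 \<theta>) < dphi (f2 - qb f1 \<theta>)"
      using sc_deriv_mono[OF scphi hphi, of "f1 - qb f1 \<theta>" "f2 - qb f1 \<theta>"] lt by simp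
    thus False using FOC_b[of \<theta> f1] FOC_b[of \<theta> f2] qe by simp
  qed
  show ?thesis
  proof (intro conjI allI impI)
    show "pi0 = EMU D p u qb qc fs" if "\<forall>f. H D p pi0 pi2 u \<phi> qb qc fs \<le> H D p pi0 pi2 u \<phi> qb qc f" for fs
      using c1 that by blast
    show "H D p pi0 pi2 u \<phi> qb qc fs \<le> H D p pi0 pi2 u \<phi> qb qc f" if "pi0 = EMU D p u qb qc fs" for fs f
      using c2 that by blast
    fix f1 f2
    assume sc: "strictly_convex_on UNIV \<phi>"
      and m: "(\<forall>f. H D p pi0 pi2 u \<phi> qb qc f1 \<le> H D p pi0 pi2 u \<phi> qb qc f) \<and>
              (\<forall>f. H D p pi0 pi2 u \<phi> qb qc f2 \<le> H D p pi0 pi2 u \<phi> qb qc f)"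
    have z: "G f1 = 0" "G f2 = 0" using c1 m unfolding G_def by auto
    show "f1 = f2"
    proof (cases f1 f2 rule: linorder_cases)
      case less thus ?thesis using key[OF sc less z] by simp
    next
      case greater thus ?thesis using key[OF sc greater z(2) z(1)] by simp
    qed
  qed
qed

end
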